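(* Let $N=(V,E,\{\tau_{ij}\},\{u_{ij}\})$ be a temporal network with static (constant in time, not necessarily equal) integer edge lengths $\tau_{ij}$, $T$ a time horizon, and $\phi$ a cut function of a minimum $(s,0)$-$(d,T)$ cut of $\textsc{TEN}(N,T)$. Let $X_\phi=\{i:\phi(i)\in\{0,T+1\}\}$ and let $C\subseteq V\setminus X_\phi$ be such that for every $i\in C$, $\phi(i)$ does not belong to the union of $\mathcal T\cup\{\theta+\tau_{ij}:\theta\in\mathcal T,\ ij\in E\}$, $\{\phi(j)-\tau_{ij},\phi(j):ij\in E,\ j\notin C\}$ and $\{\phi(j)+\tau_{ji},\phi(j):ji\in E,\ j\notin C\}$. Then $\mathrm{cost}(\phi_C^+)=\mathrm{cost}(\phi_C^-)=\mathrm{cost}(\phi)$.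
   Context: $\textsc{TEN}(N,T)$ is the steady-state network on $V\times[0,T]$ with an edge $(i,t)\to(j,t+\tau_{ij})$ of capacity $u_{ij}(t)$ whenever $ij\in E$ and $u_{ij}(t)\ne0$, and an infinite-capacity edge $(i,t)\to(i,t+1)$ for $t\in[0,T-1]$; source $(s,0)$, sink $(d,T)$. A cut function is $\phi:V\to[0,T+1]$ with $\phi(s)=0,\phi(d)=T+1$, representing the cut with source side $\{(i,t):t\ge\phi(i)\}$; $\mathrm{cost}$ is total capacity of edges from source side to sink side. $\mathcal T=\{t:\exists ij\in E,\ u_{ij}(t)\ne u_{ij}(t-1)\}\cup\{0,T,T+1\}$. $\phi_C^\pm(i)=\phi(i)\pm1$ for $i\in C$ and $\phi_C^\pm(i)=\phi(i)$ otherwise. *)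

theory Defs
  imports Complex_Main
begin

text \<open>
  Temporal network N = (V, E, tau, u): finite vertex set V, edge set E of ordered
  pairs, static integer transit times tau i j, capacities u i j t at integer times t.
  Time is discrete; the horizon [0,T] is the integer interval {0..T}.
  The time-expanded network TEN(N,T) has node set V x {0..T}, a transit arc
  (i,t) -> (j,t + tau i j) of capacity u i j t whenever (i,j) in E, u i j t ~= 0 and
  both endpoints lie in V x {0..T}, and infinite-capacity holdover arcs
  (i,t) -> (i,t+1) for t in {0..T-1}.
\<close>

text \<open>Cut function: phi : V -> {0..T+1} with phi s = 0 and phi d = T+1.
  It represents the cut whose source side is {(i,t). t >= phi i}.\<close>
definition is_cut_fun :: "'v set \<Rightarrow> int \<Rightarrow> 'v \<Rightarrow> 'v \<Rightarrow> ('v \<Rightarrow> int) \<Rightarrow> bool" where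
  "is_cut_fun V T s d phi \<longleftrightarrow>
     (\<forall>i\<in>V. 0 \<le> phi i \<and> phi i \<le> T + 1) \<and> phi s = 0 \<and> phi d = T + 1"

definition src_side :: "('v \<Rightarrow> int) \<Rightarrow> 'v \<Rightarrow> int \<Rightarrow> bool" where
  "src_side phi i t \<longleftrightarrow> phi i \<le> t"

text \<open>Times t at which the transit arc (i,t) -> (j, t + tau i j) of TEN(N,T) exists
  and goes from the source side to the sink side of the cut phi.
  (Holdover arcs (i,t) -> (i,t+1) never go from the source side to the sink side,
  since the source side is upward closed in time, so they contribute nothing.)\<close>
definition crossing_times ::
  "('v \<Rightarrow> 'v \<Rightarrow> int) \<Rightarrow> ('v \<Rightarrow> 'v \<Rightarrow> int \<Rightarrow> real) \<Rightarrow> int \<Rightarrow> ('v \<Rightarrow> int) \<Rightarrow> 'v \<Rightarrow> 'v \<Rightarrow> int set" where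
  "crossing_times tau u T phi i j =
     {t. 0 \<le> t \<and> t \<le> T \<and> 0 \<le> t + tau i j \<and> t + tau i j \<le> T \<and> u i j t \<noteq> 0
         \<and> src_side phi i t \<and> \<not> src_side phi j (t + tau i j)}"

definition ten_cost ::
  "('v \<times> 'v) set \<Rightarrow> ('v \<Rightarrow> 'v \<Rightarrow> int) \<Rightarrow> ('v \<Rightarrow> 'v \<Rightarrow> int \<Rightarrow> real) \<Rightarrow> int \<Rightarrow> ('v \<Rightarrow> int) \<Rightarrow> real" where
  "ten_cost E tau u T phi =
     (\<Sum>(i,j)\<in>E. \<Sum>t\<in>crossing_times tau u T phi i j. u i j t)"

text \<open>phi is the cut function of a minimum (s,0)-(d,T) cut.  (Every finite-capacity
  cut of TEN(N,T) is upward closed in time at each vertex, hence is given by a cut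
  function, so minimising over cut functions is minimising over all cuts.)\<close>
definition is_min_cut_fun ::
  "'v set \<Rightarrow> ('v \<times> 'v) set \<Rightarrow> ('v \<Rightarrow> 'v \<Rightarrow> int) \<Rightarrow> ('v \<Rightarrow> 'v \<Rightarrow> int \<Rightarrow> real) \<Rightarrow> int
     \<Rightarrow> 'v \<Rightarrow> 'v \<Rightarrow> ('v \<Rightarrow> int) \<Rightarrow> bool" where
  "is_min_cut_fun V E tau u T s d phi \<longleftrightarrow>
     is_cut_fun V T s d phi \<and>
     (\<forall>psi. is_cut_fun V T s d psi \<longrightarrow> ten_cost E tau u T phi \<le> ten_cost E tau u T psi)"

text \<open>The breakpoint set \<T>: times t in {1..T} where some capacity changes
  (u is only defined on [0,T]), together with 0, T, T+1.\<close>
definition breakpoints ::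
  "('v \<times> 'v) set \<Rightarrow> ('v \<Rightarrow> 'v \<Rightarrow> int \<Rightarrow> real) \<Rightarrow> int \<Rightarrow> int set" where
  "breakpoints E u T =
     {t. 1 \<le> t \<and> t \<le> T \<and> (\<exists>(i,j)\<in>E. u i j t \<noteq> u i j (t - 1))} \<union> {0, T, T + 1}"

definition shift_up :: "'v set \<Rightarrow> ('v \<Rightarrow> int) \<Rightarrow> 'v \<Rightarrow> int" where
  "shift_up C phi = (\<lambda>i. if i \<in> C then phi i + 1 else phi i)"

definition shift_down :: "'v set \<Rightarrow> ('v \<Rightarrow> int) \<Rightarrow> 'v \<Rightarrow> int" where
  "shift_down C phi = (\<lambda>i. if i \<in> C then phi i - 1 else phi i)"

end

theory Submission
  imports Defs
begin

definition FF :: "(int \<Rightarrow> real) \<Rightarrow> int \<Rightarrow> int \<Rightarrow> int \<Rightarrow> real" where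
  "FF uu a b R = (\<Sum>t\<in>{a..min R (b-1)}. uu t)"

definition PP :: "(int \<Rightarrow> real) \<Rightarrow> int \<Rightarrow> real" where
  "PP uu x = (\<Sum>t\<in>{0..<x}. uu t)"

lemma PP_step: "0 \<le> x \<Longrightarrow> PP uu (x+1) = PP uu x + uu x"
proof -
  assume "0 \<le> x"
  then have "{0..<x+1} = insert x {0..<x}" by auto
  then show ?thesis unfolding PP_def by simp
qed

lemma FF_eq: assumes "0 \<le> a"
  shows "FF uu a b R = (if a < min (R+1) b then PP uu (min (R+1) b) - PP uu a else 0)"
proof (cases "a < min (R+1) b")
  case True
  have "{a..min R (b-1)} = {0..<min (R+1) b} - {0..<a}" using assms by auto
  moreover have "{0..<a} \<subseteq> {0..<min (R+1) b}" using True by auto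
  ultimately show ?thesis using True unfolding FF_def PP_def by (simp add: sum_diff)
next
  case False
  then have "min R (b-1) < a" by auto
  then show ?thesis using False unfolding FF_def by auto
qed

lemma edge_lin:
  fixes uu :: "int \<Rightarrow> real" and a b R ea eb :: int
  assumes "0 \<le> a" "b \<le> R+1" "ea \<in> {0,1}" "eb \<in> {0,1}"
    and A: "ea = 1 \<Longrightarrow> 1 \<le> a \<and> uu a = uu (a-1)"
    and B: "eb = 1 \<Longrightarrow> b \<le> R \<and> (1 \<le> b \<longrightarrow> uu b = uu (b-1))"
    and D: "ea \<noteq> eb \<Longrightarrow> a \<noteq> b"
  shows "FF uu (a+ea) (b+eb) R + FF uu (a-ea) (b-eb) R = 2 * FF uu a b R"
proof -
  have s1: "PP uu (a+1) = PP uu a + uu a" using PP_step assms(1) by simp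
  have s2: "1 \<le> a \<Longrightarrow> PP uu a = PP uu (a-1) + uu (a-1)" using PP_step[of "a-1" uu] by simp
  have s3: "0 \<le> b \<Longrightarrow> PP uu (b+1) = PP uu b + uu b" using PP_step by simp
  have s4: "1 \<le> b \<Longrightarrow> PP uu b = PP uu (b-1) + uu (b-1)" using PP_step[of "b-1" uu] by simp
  have n: "0 \<le> a - ea" using assms(1,3) A by auto
  have n2: "0 \<le> a + ea" using assms(3) assms(1) by auto
  have E: "FF uu (a+ea) (b+eb) R + FF uu (a-ea) (b-eb) R = 2 * FF uu a b R \<longleftrightarrow>
    (if a + ea < min (R+1) (b+eb) then PP uu (min (R+1) (b+eb)) - PP uu (a+ea) else 0)
    + (if a - ea < min (R+1) (b-eb) then PP uu (min (R+1) (b-eb)) - PP uu (a-ea) else 0)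
    = 2 * (if a < min (R+1) b then PP uu (min (R+1) b) - PP uu a else 0)"
    unfolding FF_eq[OF assms(1)] FF_eq[OF n] FF_eq[OF n2] by simp
  from assms(3,4) consider "ea = 0" "eb = 0" | "ea = 1" "eb = 0" | "ea = 0" "eb = 1" | "ea = 1" "eb = 1"
    by auto
  then show ?thesis
  proof cases
    case 1 then show ?thesis by simp
  next
    case h: 2
    then have "min (R+1) b = b" using assms(2) by simp
    then show ?thesis unfolding E using h A D s1 s2 by (auto; smt (verit))
  next
    case h: 3
    then have "min (R+1) b = b" "min (R+1) (b+1) = b+1" "min (R+1) (b-1) = b-1" using B by auto
    then show ?thesis unfolding E using h B D s3 s4 assms(1) by (auto; smt (verit))
  next
    case h: 4
    then have "min (R+1) b = b" "min (R+1) (b+1) = b+1" "min (R+1) (b-1) = b-1" using B by auto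
    then show ?thesis unfolding E using h A B s1 s2 s3 s4 assms(1) by (auto; smt (verit))
  qed
qed

lemma cross_eq:
  assumes "0 \<le> psi i" "0 \<le> tau i j"
  shows "(\<Sum>t\<in>crossing_times tau u T psi i j. u i j t)
         = FF (u i j) (psi i) (psi j - tau i j) (T - tau i j)"
  unfolding FF_def
  by (rule sum.mono_neutral_left) (use assms in \<open>auto simp: crossing_times_def src_side_def\<close>)

theorem mainTheorem4:
  fixes V :: "'v set" and E :: "('v \<times> 'v) set"
    and tau :: "'v \<Rightarrow> 'v \<Rightarrow> int" and u :: "'v \<Rightarrow> 'v \<Rightarrow> int \<Rightarrow> real"
    and T :: int and s d :: 'v and phi :: "'v \<Rightarrow> int" and C :: "'v set"
  assumes "finite V" and "E \<subseteq> V \<times> V" and "s \<in> V" and "d \<in> V"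
    and "\<forall>(i,j)\<in>E. 0 \<le> tau i j"
    and "\<forall>(i,j)\<in>E. \<forall>t\<in>{0..T}. 0 \<le> u i j t"
    and "0 \<le> T"
    and "is_min_cut_fun V E tau u T s d phi"
    and "C \<subseteq> V - {i. phi i \<in> {0, T + 1}}"
    and "\<forall>i\<in>C. phi i \<notin>
           (breakpoints E u T \<union> {th + tau k l | th k l. th \<in> breakpoints E u T \<and> (k,l) \<in> E})
           \<union> {x. \<exists>j. (i,j) \<in> E \<and> j \<notin> C \<and> (x = phi j - tau i j \<or> x = phi j)}
           \<union> {x. \<exists>j. (j,i) \<in> E \<and> j \<notin> C \<and> (x = phi j + tau j i \<or> x = phi j)}"
  shows "ten_cost E tau u T (shift_up C phi) = ten_cost E tau u T phi
       \<and> ten_cost E tau u T (shift_down C phi) = ten_cost E tau u T phi"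
proof -
  let ?p = "shift_up C phi" and ?m = "shift_down C phi"
  have cut: "is_cut_fun V T s d phi" using assms(8) by (simp add: is_min_cut_fun_def)
  have rng: "\<And>i. i \<in> V \<Longrightarrow> 0 \<le> phi i \<and> phi i \<le> T + 1" using cut by (simp add: is_cut_fun_def)
  have Crng: "\<And>i. i \<in> C \<Longrightarrow> i \<in> V \<and> 1 \<le> phi i \<and> phi i \<le> T"
  proof -
    fix i assume "i \<in> C"
    then have "i \<in> V" "phi i \<noteq> 0" "phi i \<noteq> T + 1" using assms(9) by auto
    then show "i \<in> V \<and> 1 \<le> phi i \<and> phi i \<le> T" using rng[of i] by auto
  qed
  have sC: "s \<notin> C" "d \<notin> C" using assms(9) cut by (auto simp: is_cut_fun_def)
  have cutp: "is_cut_fun V T s d ?p" using cut Crng sC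
    by (auto simp: is_cut_fun_def shift_up_def; force)
  have cutm: "is_cut_fun V T s d ?m" using cut Crng sC
    by (auto simp: is_cut_fun_def shift_down_def; force)
  have gep: "ten_cost E tau u T phi \<le> ten_cost E tau u T ?p"
    using assms(8) cutp by (simp add: is_min_cut_fun_def)
  have gem: "ten_cost E tau u T phi \<le> ten_cost E tau u T ?m"
    using assms(8) cutm by (simp add: is_min_cut_fun_def)
  have edge: "(\<Sum>t\<in>crossing_times tau u T ?p i j. u i j t) + (\<Sum>t\<in>crossing_times tau u T ?m i j. u i j t)
       = 2 * (\<Sum>t\<in>crossing_times tau u T phi i j. u i j t)" if ij: "(i,j) \<in> E" for i j
  proof -
    have V: "i \<in> V" "j \<in> V" using ij assms(2) by auto
    have tau0: "0 \<le> tau i j" using ij assms(5) by auto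
    define ea :: int where "ea = (if i \<in> C then 1 else 0)"
    define eb :: int where "eb = (if j \<in> C then 1 else 0)"
    have p0: "0 \<le> ?p i" "0 \<le> ?m i" using rng[OF V(1)] Crng[of i]
      by (auto simp: shift_up_def shift_down_def)
    have pi: "?p i = phi i + ea" "?m i = phi i - ea"
      by (auto simp: shift_up_def shift_down_def ea_def)
    have pj: "?p j - tau i j = (phi j - tau i j) + eb" "?m j - tau i j = (phi j - tau i j) - eb"
      by (auto simp: shift_up_def shift_down_def eb_def)
    have L: "FF (u i j) (phi i + ea) ((phi j - tau i j) + eb) (T - tau i j)
       + FF (u i j) (phi i - ea) ((phi j - tau i j) - eb) (T - tau i j)
       = 2 * FF (u i j) (phi i) (phi j - tau i j) (T - tau i j)"
    proof (rule edge_lin)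
      show "0 \<le> phi i" using rng V by auto
      show "phi j - tau i j \<le> T - tau i j + 1" using rng V by auto
      show "ea \<in> {0,1}" "eb \<in> {0,1}" by (auto simp: ea_def eb_def)
      show "1 \<le> phi i \<and> u i j (phi i) = u i j (phi i - 1)" if "ea = 1"
      proof -
        have iC: "i \<in> C" using that by (auto simp: ea_def split: if_splits)
        have "phi i \<notin> breakpoints E u T" using assms(10) iC by blast
        then show ?thesis using Crng[OF iC] ij unfolding breakpoints_def by force
      qed
      show "phi j - tau i j \<le> T - tau i j \<and> (1 \<le> phi j - tau i j \<longrightarrow>
          u i j (phi j - tau i j) = u i j (phi j - tau i j - 1))" if "eb = 1"
      proof -
        have jC: "j \<in> C" using that by (auto simp: eb_def split: if_splits)
        have "phi j \<noteq> (phi j - tau i j) + tau i j" if "phi j - tau i j \<in> breakpoints E u T"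
          using assms(10) jC ij that by blast
        then have "phi j - tau i j \<notin> breakpoints E u T" by auto
        then show ?thesis using Crng[OF jC] ij tau0 unfolding breakpoints_def by force
      qed
      show "phi i \<noteq> phi j - tau i j" if "ea \<noteq> eb"
      proof (cases "i \<in> C")
        case True
        then have "j \<notin> C" using that by (auto simp: ea_def eb_def split: if_splits)
        then show ?thesis using assms(10) True ij by blast
      next
        case False
        then have "j \<in> C" using that by (auto simp: ea_def eb_def split: if_splits)
        then have "phi j \<noteq> phi i + tau i j" using assms(10) False ij by blast
        then show ?thesis by auto
      qed
    qed
    show ?thesis
      unfolding cross_eq[where psi="?p" and i=i and j=j and tau=tau, OF p0(1) tau0]
        cross_eq[where psi="?m" and i=i and j=j and tau=tau, OF p0(2) tau0]
        cross_eq[where psi=phi and i=i and j=j and tau=tau, OF conjunct1[OF rng[OF V(1)]] tau0] pi pj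
      using L by simp
  qed
  have "ten_cost E tau u T ?p + ten_cost E tau u T ?m = 2 * ten_cost E tau u T phi"
    unfolding ten_cost_def sum.distrib[symmetric] sum_distrib_left
    by (rule sum.cong) (auto simp: edge)
  then show ?thesis using gep gem by linarith
qed

end
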